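(* In the FIND setting of the context, fix a leaf cluster $\mathcal C_r$ and a consistent ordering of $\mathcal T_r^+$. If $\mathcal C_i$ and $\mathcal C_j$ are the two children of $\mathcal C_k$ in $\mathcal T_r^+$, then $\boldsymbol\Sigma_k(\mathcal B_i,\mathcal B_j)=\boldsymbol\Sigma(\mathcal B_i,\mathcal B_j)$ and $\boldsymbol\Sigma_k(\mathcal B_j,\mathcal B_i)=\boldsymbol\Sigma(\mathcal B_j,\mathcal B_i)$.
   Context: Setting (FIND). $\mathcal M$ is a finite set of mesh nodes; $\mathbf A$ is an invertible complex matrix indexed by $\mathcal M\times\mathcal M$, structurally symmetric ($A_{ij}\neq0\iff A_{ji}\neq0$); distinct nodes $i,j$ are connected if $A_{ij}\neq 0$. $\boldsymbol\Sigma$ is a complex matrix indexed by $\mathcal M\times\mathcal M$ with $\Sigma_{ij}=0$ whenever $i\neq j$ and $i,j$ are not connected. $\dagger$ is conjugate transpose, $\mathbf X^{-\dagger}=(\mathbf X^{-1})^\dagger$. $\mathbf X(X,Y)$ is the submatrix with rows in $X$, columns in $Y$. For a cluster $\mathcal C\subseteq\mathcal M$: boundary set $\mathcal B_{\mathcal C}=\{i\in\mathcal C: A_{ij}\neq 0\text{ for some } j\notin\mathcal C\}$, inner set $\mathcal I_{\mathcal C}=\mathcal C\setminus\mathcal B_{\mathcal C}$; for $\mathcal C_g$ write $\mathcal B_g,\mathcal I_g$. Cluster tree: $\mathcal T$ is a rooted binary tree of clusters with root $\mathcal M$, each non-leaf cluster the disjoint union of its two children. For a leaf $\mathcal C_r$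 with path $r=a_0,\dots,a_d$ (root) and $b_k$ the sibling of $a_k$, the augmented tree $\mathcal T_r^+$ has root $\mathcal C_{-r}=\mathcal M\setminus\mathcal C_r$; for $0\le k\le d-2$, $\mathcal C_{-a_k}=\mathcal M\setminus\mathcal C_{a_k}$ has children $\mathcal C_{b_k}$ and $\mathcal C_{-a_{k+1}}$, with $\mathcal C_{-a_{d-1}}$ identified with $\mathcal C_{b_{d-1}}$; each basic cluster $\mathcal C_{b_k}$ carries its subtree from $\mathcal T$. Private inner nodes: $\mathcal S_g=\mathcal I_g$ for a leaf $g$ of $\mathcal T_r^+$; $\mathcal S_g=\mathcal I_g\setminus(\mathcal I_i\cup\mathcal I_j)$ if $g$ has children $i,j$. Consistent ordering: a total order $g_1,\dots,g_m$ of the nodes of $\mathcal T_r^+$ with every node after all its descendants. Elimination: $\mathbf A_{g_1}=\mathbf A$, $\boldsymbol\Sigma_{g_1}=\boldsymbol\Sigma$; for each $g$ (with $\mathbf A_g(\mathcal S_g,\mathcal S_g)$ invertible), $\mathcal L_g=\mathbf A_g(\mathcal B_g,\mathcal S_g)\mathbf A_g(\mathcal S_g,\mathcal S_g)^{-1}$, $\mathbf L_g$ is the identity on $\mathcal M$ except $\mathbf L_g(\mathcal B_g,\mathcal S_g)=\mathcal L_g$, $\mathbf A_{g+}=\mathbf L_g^{-1}\mathbf A_g$, $\boldsymbol\Sigma_{g+}=\mathbf L_g^{-1}\boldsymbol\Sigma_g\mathbf L_g^{-\dagger}$, and $\mathbf A_{g_{t+1}}=\mathbf A_{g_t+}$,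 $\boldsymbol\Sigma_{g_{t+1}}=\boldsymbol\Sigma_{g_t+}$. Thus $\boldsymbol\Sigma_k$ is the matrix just before eliminating $\mathcal S_k$. *)

theory Defs
  imports Complex_Main
begin

text \<open>Mesh nodes: the elements of a finite type 'a (the mesh M is UNIV).
  Matrices indexed by M x M are functions 'a => 'a => complex.\<close>

type_synonym 'a cmat = "'a \<Rightarrow> 'a \<Rightarrow> complex"

definition idm :: "'a cmat" where
  "idm = (\<lambda>i j. if i = j then 1 else 0)"

definition mmul :: "'a::finite cmat \<Rightarrow> 'a cmat \<Rightarrow> 'a cmat" where
  "mmul X Y = (\<lambda>i j. \<Sum>k\<in>UNIV. X i k * Y k j)"

definition adj :: "'a cmat \<Rightarrow> 'a cmat" where
  "adj X = (\<lambda>i j. cnj (X j i))"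

definition inverse_on :: "'a set \<Rightarrow> 'a cmat \<Rightarrow> 'a cmat \<Rightarrow> bool" where
  "inverse_on S X Y \<longleftrightarrow>
     (\<forall>i\<in>S. \<forall>j\<in>S. (\<Sum>k\<in>S. X i k * Y k j) = idm i j \<and> (\<Sum>k\<in>S. Y i k * X k j) = idm i j)"

definition invertible_on :: "'a set \<Rightarrow> 'a cmat \<Rightarrow> bool" where
  "invertible_on S X \<longleftrightarrow> (\<exists>Y. inverse_on S X Y)"

definition minv_on :: "'a set \<Rightarrow> 'a cmat \<Rightarrow> 'a cmat" where
  "minv_on S X = (\<lambda>i j. if i \<in> S \<and> j \<in> S then (SOME Y. inverse_on S X Y) i j else 0)"

definition minv :: "'a cmat \<Rightarrow> 'a cmat" where
  "minv X = minv_on UNIV X"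

definition bnd :: "'a cmat \<Rightarrow> 'a set \<Rightarrow> 'a set" where
  "bnd A C = {i \<in> C. \<exists>j. j \<notin> C \<and> A i j \<noteq> 0}"

definition inner :: "'a cmat \<Rightarrow> 'a set \<Rightarrow> 'a set" where
  "inner A C = C - bnd A C"

datatype 'a ctree = Leaf "'a set" | Node "'a ctree" "'a ctree"

fun cl :: "'a ctree \<Rightarrow> 'a set" where
  "cl (Leaf S) = S"
| "cl (Node l r) = cl l \<union> cl r"

fun wf_ctree :: "'a ctree \<Rightarrow> bool" where
  "wf_ctree (Leaf S) = True"
| "wf_ctree (Node l r) = (wf_ctree l \<and> wf_ctree r \<and> cl l \<inter> cl r = {})"

text \<open>Nodes are addressed by paths from the root (False = left, True = right).\<close>
fun sub :: "'a ctree \<Rightarrow> bool list \<Rightarrow> 'a ctree option" where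
  "sub t [] = Some t"
| "sub (Node l r) (b # q) = sub (if b then r else l) q"
| "sub (Leaf S) (b # q) = None"

definition nodes :: "'a ctree \<Rightarrow> bool list set" where
  "nodes t = {q. sub t q \<noteq> None}"

definition clus :: "'a ctree \<Rightarrow> bool list \<Rightarrow> 'a set" where
  "clus t q = cl (the (sub t q))"

text \<open>Augmented tree T_r^+ for the leaf at path p.  Walking down from the root
  along p, acc is the augmented tree of the complement of the current node
  (None at the root).  Going from a_{k+1} to a_k with sibling b_k, the complement
  node -a_k gets children b_k and -a_{k+1}; at the root, -a_{d-1} is b_{d-1}.\<close>
fun aug :: "'a ctree option \<Rightarrow> 'a ctree \<Rightarrow> bool list \<Rightarrow> 'a ctree option" where
  "aug acc t [] = acc"
| "aug acc (Node l r) (x # p) =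
     aug (Some (let b = (if x then l else r) in
                case acc of None \<Rightarrow> b | Some c \<Rightarrow> Node b c))
         (if x then r else l) p"
| "aug acc (Leaf S) (x # p) = None"

definition priv :: "'a cmat \<Rightarrow> 'a ctree \<Rightarrow> bool list \<Rightarrow> 'a set" where
  "priv A U q = (case the (sub U q) of
      Leaf S \<Rightarrow> inner A S
    | Node l r \<Rightarrow> inner A (cl (Node l r)) - (inner A (cl l) \<union> inner A (cl r)))"

definition consistent_ordering :: "'a ctree \<Rightarrow> bool list list \<Rightarrow> bool" where
  "consistent_ordering U ord \<longleftrightarrow> distinct ord \<and> set ord = nodes U \<and>
     (\<forall>s<length ord. \<forall>t<length ord. \<forall>z. z \<noteq> [] \<and> ord ! s = ord ! t @ z \<longrightarrow> s < t)"

text \<open>One elimination step at node q: (A_g, Sigma_g) to (A_{g+}, Sigma_{g+}).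
  Boundary sets are taken w.r.t. the original matrix A0.\<close>
definition elim_step :: "'a::finite cmat \<Rightarrow> 'a ctree \<Rightarrow> bool list \<Rightarrow> 'a cmat \<times> 'a cmat \<Rightarrow> 'a cmat \<times> 'a cmat" where
  "elim_step A0 U q st = (let Ag = fst st; Sg = snd st;
       S = priv A0 U q; B = bnd A0 (clus U q);
       calL = (\<lambda>b s. \<Sum>k\<in>S. Ag b k * minv_on S Ag k s);
       L = (\<lambda>a c. if a \<in> B \<and> c \<in> S then calL a c else idm a c);
       Li = minv L
     in (mmul Li Ag, mmul (mmul Li Sg) (adj Li)))"

text \<open>State (A_{g_{t+1}}, Sigma_{g_{t+1}}) before the (t+1)-th elimination, i.e. after t steps.\<close>
definition elim_state :: "'a::finite cmat \<Rightarrow> 'a cmat \<Rightarrow> 'a ctree \<Rightarrow> bool list list \<Rightarrow> nat \<Rightarrow> 'a cmat \<times> 'a cmat" where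
  "elim_state A0 Sig0 U ord t = foldl (\<lambda>st q. elim_step A0 U q st) (A0, Sig0) (take t ord)"

end

theory Submission
  imports Defs
begin

lemma sub_append: "sub t (q @ z) = (case sub t q of None \<Rightarrow> None | Some t' \<Rightarrow> sub t' z)"
  by (induction t q rule: sub.induct) auto

lemma sub_cl_subset: "sub t q = Some t' \<Longrightarrow> cl t' \<subseteq> cl t"
  by (induction t q arbitrary: t' rule: sub.induct) (auto split: if_splits)

lemma laminar:
  "wf_ctree t \<Longrightarrow> sub t q1 = Some t1 \<Longrightarrow> sub t q2 = Some t2 \<Longrightarrow> cl t1 \<inter> cl t2 \<noteq> {}
   \<Longrightarrow> (\<exists>z. q2 = q1 @ z) \<or> (\<exists>z. q1 = q2 @ z)"
proof (induction t arbitrary: q1 q2)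
  case (Leaf S)
  then show ?case by (cases q1; cases q2) auto
next
  case (Node l r)
  show ?case
  proof (cases q1)
    case Nil then show ?thesis by auto
  next
    case (Cons b1 p1)
    show ?thesis
    proof (cases q2)
      case Nil then show ?thesis by auto
    next
      case (Cons b2 p2)
      have s1: "sub (if b1 then r else l) p1 = Some t1" using Node.prems \<open>q1 = b1 # p1\<close> by simp
      have s2: "sub (if b2 then r else l) p2 = Some t2" using Node.prems \<open>q2 = b2 # p2\<close> by simp
      show ?thesis
      proof (cases "b1 = b2")
        case True
        then show ?thesis
        proof (cases b1)
          case True
          with Node.IH(2)[of p1 p2] Node.prems s1 s2 \<open>b1 = b2\<close> show ?thesis
            using \<open>q1 = b1 # p1\<close> \<open>q2 = b2 # p2\<close> by auto
        next
          case False
          with Node.IH(1)[of p1 p2] Node.prems s1 s2 \<open>b1 = b2\<close> show ?thesis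
            using \<open>q1 = b1 # p1\<close> \<open>q2 = b2 # p2\<close> by auto
        qed
      next
        case False
        have "cl t1 \<subseteq> cl (if b1 then r else l)" "cl t2 \<subseteq> cl (if b2 then r else l)"
          using sub_cl_subset[OF s1] sub_cl_subset[OF s2] by auto
        with False Node.prems(1,4) have False by (cases b1; cases b2) auto
        then show ?thesis ..
      qed
    qed
  qed
qed

lemma aug_wf:
  "wf_ctree t \<Longrightarrow> (case acc of None \<Rightarrow> True | Some c \<Rightarrow> wf_ctree c \<and> cl c \<inter> cl t = {})
   \<Longrightarrow> aug acc t p = Some U \<Longrightarrow> wf_ctree U"
proof (induction acc t p rule: aug.induct)
  case (1 acc t)
  then show ?case by auto
next
  case (2 acc l r x p)
  show ?case
    using "2.IH" "2.prems" by (auto simp: Let_def split: option.splits if_splits)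
next
  case (3 acc S x p)
  then show ?case by simp
qed

lemma Linv_support:
  fixes L N :: "'a::finite cmat" and B S :: "'a set"
  assumes BS: "B \<inter> S = {}"
    and Ldef: "L = (\<lambda>a c. if a \<in> B \<and> c \<in> S then N a c else idm a c)"
  shows "\<not> (x \<in> B \<and> y \<in> S) \<Longrightarrow> minv L x y = idm x y"
proof -
  define M where "M = (\<lambda>a c. if a \<in> B \<and> c \<in> S then - N a c else idm a c)"
  have inv: "inverse_on UNIV L M"
    unfolding inverse_on_def
  proof (intro ballI conjI)
    fix i j :: 'a
    show "(\<Sum>k\<in>UNIV. L i k * M k j) = idm i j"
    proof (cases "i \<in> B")
      case False
      then have "\<And>k. L i k * M k j = (if k = i then M i j else 0)"
        by (auto simp: Ldef idm_def)
      then show ?thesis using False by (simp add: M_def)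
    next
      case True
      then have "\<And>k. L i k * M k j = (if k = i then M i j else 0) + (if k = j \<and> j \<in> S then N i j else 0)"
        using BS by (auto simp: Ldef M_def idm_def)
      then show ?thesis using True BS by (auto simp: sum.distrib M_def idm_def)
    qed
    show "(\<Sum>k\<in>UNIV. M i k * L k j) = idm i j"
    proof (cases "i \<in> B")
      case False
      then have "\<And>k. M i k * L k j = (if k = i then L i j else 0)"
        by (auto simp: M_def idm_def)
      then show ?thesis using False by (simp add: Ldef)
    next
      case True
      then have "\<And>k. M i k * L k j = (if k = i then L i j else 0) + (if k = j \<and> j \<in> S then - N i j else 0)"
        using BS by (auto simp: Ldef M_def idm_def)
      then show ?thesis using True BS by (auto simp: sum.distrib Ldef idm_def)
    qed
  qed
  define Y where "Y = (SOME Y. inverse_on UNIV L Y)"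
  have Y: "inverse_on UNIV L Y" unfolding Y_def by (rule someI[of _ M], rule inv)
  have mY: "minv L = Y" unfolding minv_def minv_on_def Y_def by simp
  assume nxy: "\<not> (x \<in> B \<and> y \<in> S)"
  have prod: "(\<Sum>k\<in>UNIV. L x k * Y k y) = idm x y" using Y unfolding inverse_on_def by blast
  have rows: "\<And>a c. a \<notin> B \<Longrightarrow> Y a c = idm a c"
  proof -
    fix a c assume "a \<notin> B"
    then have "\<And>k. L a k * Y k c = (if k = a then Y a c else 0)" by (auto simp: Ldef idm_def)
    moreover have "(\<Sum>k\<in>UNIV. L a k * Y k c) = idm a c" using Y unfolding inverse_on_def by blast
    ultimately show "Y a c = idm a c" by simp
  qed
  show ?thesis
  proof (cases "x \<in> B")
    case False then show ?thesis using rows mY by simp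
  next
    case True
    with nxy have yS: "y \<notin> S" by blast
    have Yk: "Y k y = 0" if "k \<in> S" for k
    proof -
      have "k \<notin> B" using BS that by blast
      then have "Y k y = idm k y" by (rule rows)
      then show ?thesis using yS that by (auto simp: idm_def)
    qed
    have "\<And>k. L x k * Y k y = (if k = x then Y x y else 0)"
      using True yS BS Yk by (auto simp: Ldef idm_def)
    then show ?thesis using prod mY by simp
  qed
qed

lemma step_preserve:
  fixes Li Sg :: "'a::finite cmat" and B S C :: "'a set"
  assumes Li: "\<And>x y. \<not> (x \<in> B \<and> y \<in> S) \<Longrightarrow> Li x y = idm x y"
    and BC: "B \<subseteq> C" and SC: "S \<subseteq> C" and BS: "B \<inter> S = {}"
    and zero: "\<And>s y. s \<in> S \<Longrightarrow> y \<notin> C \<Longrightarrow> Sg s y = 0 \<and> Sg y s = 0"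
    and nxy: "\<not> (x \<in> C \<and> y \<in> C)"
  shows "mmul (mmul Li Sg) (adj Li) x y = Sg x y"
proof (cases "y \<in> C")
  case False
  have "y \<notin> B" using False BC by blast
  have adjy: "\<And>z. adj Li z y = idm z y"
    using \<open>y \<notin> B\<close> Li[of y] by (auto simp: adj_def idm_def)
  have "mmul (mmul Li Sg) (adj Li) x y = (\<Sum>w\<in>UNIV. Li x w * Sg w y)"
  proof -
    have "\<And>z. (\<Sum>w\<in>UNIV. Li x w * Sg w z) * idm z y = (if z = y then (\<Sum>w\<in>UNIV. Li x w * Sg w y) else 0)"
      by (simp add: idm_def)
    then show ?thesis by (simp add: mmul_def adjy)
  qed
  also have "\<dots> = (\<Sum>w\<in>UNIV. idm x w * Sg w y)"
  proof (rule sum.cong[OF refl])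
    fix w show "Li x w * Sg w y = idm x w * Sg w y"
      using Li[of x w] zero[of w y] False BS by (cases "x \<in> B \<and> w \<in> S") (auto simp: idm_def)
  qed
  also have "\<dots> = Sg x y"
  proof -
    have "\<And>w. idm x w * Sg w y = (if w = x then Sg x y else 0)" by (simp add: idm_def)
    then show ?thesis by simp
  qed
  finally show ?thesis .
next
  case True
  with nxy have xC: "x \<notin> C" by blast
  have Lx: "\<And>w. Li x w = idm x w" using xC BC Li by auto
  have "mmul (mmul Li Sg) (adj Li) x y = (\<Sum>z\<in>UNIV. Sg x z * cnj (Li y z))"
  proof -
    have "\<And>z. (\<Sum>w\<in>UNIV. idm x w * Sg w z) = Sg x z"
    proof -
      fix z
      have "\<And>w. idm x w * Sg w z = (if w = x then Sg x z else 0)" by (simp add: idm_def)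
      then show "(\<Sum>w\<in>UNIV. idm x w * Sg w z) = Sg x z" by simp
    qed
    then show ?thesis by (simp add: mmul_def adj_def Lx)
  qed
  also have "\<dots> = (\<Sum>z\<in>UNIV. Sg x z * idm y z)"
  proof (rule sum.cong[OF refl])
    fix z show "Sg x z * cnj (Li y z) = Sg x z * idm y z"
      using Li[of y z] zero[of z x] xC BS by (cases "y \<in> B \<and> z \<in> S") (auto simp: idm_def)
  qed
  also have "\<dots> = Sg x y"
  proof -
    have "\<And>w. Sg x w * idm y w = (if w = y then Sg x y else 0)" by (simp add: idm_def)
    then show ?thesis by simp
  qed
  finally show ?thesis .
qed

theorem corollary1:
  fixes A Sig :: "'a::finite \<Rightarrow> 'a \<Rightarrow> complex"
    and T U :: "'a ctree" and p k :: "bool list" and ord :: "bool list list"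
  assumes A_inv: "invertible_on UNIV A"
    and A_sym: "\<forall>i j. A i j \<noteq> 0 \<longleftrightarrow> A j i \<noteq> 0"
    and Sig_sparse: "\<forall>i j. i \<noteq> j \<and> A i j = 0 \<longrightarrow> Sig i j = 0"
    and T_wf: "wf_ctree T" and T_root: "cl T = UNIV"
    and r_leaf: "\<exists>S. sub T p = Some (Leaf S)" and p_nonroot: "p \<noteq> []"
    and U_def: "aug None T p = Some U"
    and ord_cons: "consistent_ordering U ord"
    and piv_inv: "\<forall>t<length ord. invertible_on (priv A U (ord ! t)) (fst (elim_state A Sig U ord t))"
    and k_node: "\<exists>l r. sub U k = Some (Node l r)"
  shows "\<forall>t<length ord. ord ! t = k \<longrightarrow>
           (\<forall>a\<in>bnd A (clus U (k @ [False])). \<forall>b\<in>bnd A (clus U (k @ [True])).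
              snd (elim_state A Sig U ord t) a b = Sig a b \<and>
              snd (elim_state A Sig U ord t) b a = Sig b a)"
proof -
  have U_wf: "wf_ctree U" using aug_wf[OF T_wf _ U_def] by simp
  have dist: "distinct ord" and setord: "set ord = nodes U"
    and cons: "\<And>s t z. s < length ord \<Longrightarrow> t < length ord \<Longrightarrow> z \<noteq> [] \<Longrightarrow> ord ! s = ord ! t @ z \<Longrightarrow> s < t"
    using ord_cons unfolding consistent_ordering_def by blast+
  have node: "\<And>u. u < length ord \<Longrightarrow> \<exists>t'. sub U (ord ! u) = Some t' \<and> clus U (ord ! u) = cl t'"
    using setord unfolding nodes_def clus_def by (metis mem_Collect_eq nth_mem option.collapse option.sel)
  define J where "J t \<longleftrightarrow> (\<forall>x y. snd (elim_state A Sig U ord t) x y \<noteq> Sig x y \<longrightarrow>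
        (\<exists>u<t. x \<in> clus U (ord ! u) \<and> y \<in> clus U (ord ! u)))" for t
  have J: "t \<le> length ord \<Longrightarrow> J t" for t
  proof (induction t)
    case 0
    then show ?case by (simp add: J_def elim_state_def)
  next
    case (Suc t)
    then have tl: "t < length ord" by simp
    have IH: "J t" using Suc by simp
    define q where "q = ord ! t"
    define st where "st = elim_state A Sig U ord t"
    define S where "S = priv A U q"
    define B where "B = bnd A (clus U q)"
    define C where "C = clus U q"
    obtain tq where tq: "sub U q = Some tq" "C = cl tq" using node[OF tl] q_def C_def by blast
    have BC: "B \<subseteq> C" by (auto simp: B_def C_def bnd_def)
    have SI: "S \<subseteq> inner A C"
      using tq by (cases tq) (auto simp: S_def priv_def clus_def C_def)
    then have SC: "S \<subseteq> C" and BS: "B \<inter> S = {}" by (auto simp: inner_def B_def C_def)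
    have stSuc: "elim_state A Sig U ord (Suc t) = elim_step A U q st"
      by (simp add: elim_state_def st_def q_def take_Suc_conv_app_nth[OF tl])
    define calL where "calL = (\<lambda>b s. \<Sum>k\<in>S. fst st b k * minv_on S (fst st) k s)"
    define L where "L = (\<lambda>a c. if a \<in> B \<and> c \<in> S then calL a c else idm a c)"
    have snd_eq: "snd (elim_state A Sig U ord (Suc t)) = mmul (mmul (minv L) (snd st)) (adj (minv L))"
      unfolding stSuc elim_step_def Let_def L_def calL_def S_def B_def by simp
    have Li: "\<And>x y. \<not> (x \<in> B \<and> y \<in> S) \<Longrightarrow> minv L x y = idm x y"
      by (rule Linv_support[OF BS L_def])
    have unchanged: "snd st s y = Sig s y" if "s \<in> C \<and> y \<notin> C \<or> y \<in> C \<and> s \<notin> C" for s y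
    proof (rule ccontr)
      assume "snd st s y \<noteq> Sig s y"
      with IH obtain u where u: "u < t" "s \<in> clus U (ord ! u)" "y \<in> clus U (ord ! u)"
        unfolding J_def st_def by blast
      from u tl obtain tu where tu: "sub U (ord ! u) = Some tu" "clus U (ord ! u) = cl tu"
        using node[of u] by auto
      have "cl tu \<inter> cl tq \<noteq> {}" using u tu tq that by auto
      from laminar[OF U_wf tu(1) tq(1) this] show False
      proof
        assume "\<exists>z. q = ord ! u @ z"
        then obtain z where z: "q = ord ! u @ z" by blast
        have "z \<noteq> []" using z dist u tl q_def nth_eq_iff_index_eq by fastforce
        then have "t < u" using cons[of t u z] z u tl q_def by simp
        then show False using u by simp
      next
        assume "\<exists>z. ord ! u = q @ z"
        then obtain z where z: "ord ! u = q @ z" by blast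
        then have "sub tq z = Some tu" using tu tq by (simp add: sub_append)
        then have "cl tu \<subseteq> C" using sub_cl_subset tq by auto
        then show False using u tu that by auto
      qed
    qed
    have zero: "snd st s y = 0 \<and> snd st y s = 0" if "s \<in> S" "y \<notin> C" for s y
    proof -
      have sC: "s \<in> C" and sB: "s \<notin> bnd A C" using that SI by (auto simp: inner_def)
      then have "A s y = 0" using that by (auto simp: bnd_def)
      then have "A y s = 0" using A_sym by blast
      moreover have "s \<noteq> y" using sC that by auto
      moreover have "snd st s y = Sig s y" "snd st y s = Sig y s"
        using unchanged sC that(2) by blast+
      ultimately show ?thesis using \<open>A s y = 0\<close> Sig_sparse by metis
    qed
    show ?case unfolding J_def
    proof (intro allI impI)
      fix x y
      assume ne: "snd (elim_state A Sig U ord (Suc t)) x y \<noteq> Sig x y"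
      show "\<exists>u<Suc t. x \<in> clus U (ord ! u) \<and> y \<in> clus U (ord ! u)"
      proof (cases "x \<in> C \<and> y \<in> C")
        case True then show ?thesis using C_def q_def by (intro exI[of _ t]) auto
      next
        case False
        have "snd (elim_state A Sig U ord (Suc t)) x y = snd st x y"
          unfolding snd_eq by (rule step_preserve[OF Li BC SC BS zero False]) auto
        then have "snd st x y \<noteq> Sig x y" using ne by simp
        with IH show ?thesis unfolding J_def st_def using less_SucI by blast
      qed
    qed
  qed
  show ?thesis
  proof (intro allI impI ballI)
    fix t a b
    assume tl: "t < length ord" and kt: "ord ! t = k"
      and a: "a \<in> bnd A (clus U (k @ [False]))" and b: "b \<in> bnd A (clus U (k @ [True]))"
    obtain l r where lr: "sub U k = Some (Node l r)" using k_node by blast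
    have sl: "sub U (k @ [False]) = Some l" and sr: "sub U (k @ [True]) = Some r"
      using lr by (simp_all add: sub_append)
    have aC: "a \<in> cl l" and bC: "b \<in> cl r" using a b sl sr by (auto simp: bnd_def clus_def)
    have wfk: "wf_ctree (Node l r)"
    proof -
      have "wf_ctree t'" if "wf_ctree t0" "sub t0 q = Some t'" for t0 q t'
        using that by (induction t0 q arbitrary: t' rule: sub.induct) (auto split: if_splits)
      then show ?thesis using U_wf lr by blast
    qed
    then have disj: "cl l \<inter> cl r = {}" by simp
    have key: "\<not> (x \<in> clus U (ord ! u) \<and> y \<in> clus U (ord ! u))"
      if u: "u < t" and xy: "x \<in> cl l" "y \<in> cl r" for u x y
    proof
      assume inn: "x \<in> clus U (ord ! u) \<and> y \<in> clus U (ord ! u)"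
      from u tl obtain tu where tu: "sub U (ord ! u) = Some tu" "clus U (ord ! u) = cl tu"
        using node[of u] by auto
      have ul: "u < length ord" using u tl by simp
      have "cl tu \<inter> cl l \<noteq> {}" using inn tu xy by auto
      from laminar[OF U_wf tu(1) sl this] show False
      proof
        assume "\<exists>z. k @ [False] = ord ! u @ z"
        then obtain z where z: "k @ [False] = ord ! u @ z" by blast
        show False
        proof (cases z rule: rev_cases)
          case Nil
          then have "tu = l" using z tu sl by simp
          then show False using inn tu xy disj by auto
        next
          case (snoc z' w)
          then have "k = ord ! u @ z'" using z by simp
          moreover have "z' \<noteq> []"
          proof
            assume "z' = []"
            then have "ord ! t = ord ! u" using \<open>k = ord ! u @ z'\<close> kt by simp
            then show False using dist u tl ul nth_eq_iff_index_eq by fastforce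
          qed
          ultimately have "t < u" using cons[of t u z'] tl ul kt by simp
          then show False using u by simp
        qed
      next
        assume "\<exists>z. ord ! u = (k @ [False]) @ z"
        then obtain z where z: "ord ! u = (k @ [False]) @ z" by blast
        then have "sub l z = Some tu" using tu sl by (simp add: sub_append del: append_assoc)
        then have "cl tu \<subseteq> cl l" using sub_cl_subset by auto
        then show False using inn tu xy disj by auto
      qed
    qed
    have Jt: "J t" using J tl by simp
    show "snd (elim_state A Sig U ord t) a b = Sig a b \<and> snd (elim_state A Sig U ord t) b a = Sig b a"
      using Jt key[of _ a b] key[of _ a b] aC bC unfolding J_def by blast
  qed
qed

end
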